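(* Let $n\ge5$, $x_1,\dots,x_{n-1}>0$, $\gamma,\delta>0$ with $\gamma\ne1\ne\delta$, $x_0=1$, and let $\mathbf{R}$ be the $n\times n$ matrix with entries $r_{ij}=x_{j-1}/x_{i-1}$ except $r_{12}=\delta x_1$, $r_{21}=1/(\delta x_1)$, $r_{34}=\gamma x_3/x_2$, $r_{43}=x_2/(\gamma x_3)$. Let $\mathbf{w}^{EM}$ be its principal right eigenvector. If $\gamma,\delta>1$, then $w_1^{EM}/w_4^{EM}>x_3$; if $\gamma,\delta<1$, then $w_1^{EM}/w_4^{EM}<x_3$.
   Context: The principal right eigenvector is the positive (Perron) eigenvector belonging to the largest eigenvalue. *)

theory Defs
  imports "Jordan_Normal_Form.Char_Poly"
begin

text \<open>The n x n matrix R of the paper, with 0-based indices: entry (i,j) here is r_{(i+1)(j+1)}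
  of the paper, i.e. x j / x i, except for the four perturbed entries.\<close>
definition EM_matrix :: "nat \<Rightarrow> (nat \<Rightarrow> real) \<Rightarrow> real \<Rightarrow> real \<Rightarrow> real mat" where
  "EM_matrix n x \<gamma> \<delta> = mat n n (\<lambda>(i, j).
     if (i, j) = (0, 1) then \<delta> * x 1
     else if (i, j) = (1, 0) then 1 / (\<delta> * x 1)
     else if (i, j) = (2, 3) then \<gamma> * x 3 / x 2
     else if (i, j) = (3, 2) then x 2 / (\<gamma> * x 3)
     else x j / x i)"

definition principal_right_eigenvector :: "real mat \<Rightarrow> real vec \<Rightarrow> bool" where
  "principal_right_eigenvector A w \<longleftrightarrow>
     (\<exists>r. eigenvector A w r \<and> (\<forall>i < dim_vec w. w $ i > 0) \<and>
          (\<forall>\<mu>. eigenvalue (map_mat complex_of_real A) \<mu> \<longrightarrow> cmod \<mu> \<le> r))"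

end

theory Submission
  imports Defs
begin

theorem mainTheorem20:
  fixes n :: nat and x :: "nat \<Rightarrow> real" and \<gamma> \<delta> :: real and w :: "real vec"
  assumes "n \<ge> 5"
    and "\<forall>i \<in> {1..n-1}. x i > 0"
    and "x 0 = 1"
    and "\<gamma> > 0" and "\<delta> > 0" and "\<gamma> \<noteq> 1" and "\<delta> \<noteq> 1"
    and "principal_right_eigenvector (EM_matrix n x \<gamma> \<delta>) w"
  shows "(\<gamma> > 1 \<and> \<delta> > 1 \<longrightarrow> w $ 0 / w $ 3 > x 3)
       \<and> (\<gamma> < 1 \<and> \<delta> < 1 \<longrightarrow> w $ 0 / w $ 3 < x 3)"
proof -
  define A where "A = EM_matrix n x \<gamma> \<delta>"
  obtain r where ev: "eigenvector A w r" and wpos: "\<forall>i < dim_vec w. w $ i > 0"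
    using assms(8) unfolding principal_right_eigenvector_def A_def by blast
  have dA: "dim_row A = n" "dim_col A = n" by (auto simp: A_def EM_matrix_def)
  have wc: "w \<in> carrier_vec n" and eq: "A *\<^sub>v w = r \<cdot>\<^sub>v w"
    using ev dA unfolding eigenvector_def by auto
  have dw: "dim_vec w = n" using wc by auto
  have xpos: "\<And>i. i < n \<Longrightarrow> x i > 0"
  proof -
    fix i assume "i < n"
    then show "x i > 0" using assms(2,3) by (cases "i = 0") auto
  qed
  have wp: "\<And>i. i < n \<Longrightarrow> w $ i > 0" using wpos dw by auto
  have row: "\<And>i. i < n \<Longrightarrow> r * w $ i = (\<Sum>j<n. A $$ (i, j) * w $ j)"
  proof -
    fix i assume i: "i < n"
    have "r * w $ i = (A *\<^sub>v w) $ i" using eq i dw by simp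
    also have "\<dots> = row A i \<bullet> w" using i dA by simp
    also have "\<dots> = (\<Sum>j<n. A $$ (i, j) * w $ j)"
      unfolding scalar_prod_def dw using dA i
      by (auto intro!: sum.cong simp: lessThan_atLeast0)
    finally show "r * w $ i = (\<Sum>j<n. A $$ (i, j) * w $ j)" .
  qed
  define S where "S = (\<Sum>j<n. x j * w $ j)"
  have n5: "0 < n" "1 < n" "2 < n" "3 < n" "4 < n" using assms(1) by auto
  have Spos: "S > 0" unfolding S_def
    using n5 by (intro sum_pos) (auto intro!: mult_pos_pos xpos wp)
  have r0: "r * w $ 0 = S + (\<delta> - 1) * x 1 * w $ 1"
  proof -
    have "r * w $ 0 = (\<Sum>j<n. x j * w $ j + (if j = 1 then (\<delta> - 1) * x 1 * w $ 1 else 0))"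
      unfolding row[OF n5(1)]
      by (intro sum.cong refl) (auto simp: A_def EM_matrix_def assms(3) algebra_simps)
    also have "\<dots> = S + (\<delta> - 1) * x 1 * w $ 1"
      unfolding sum.distrib S_def using n5 by simp
    finally show ?thesis .
  qed
  have r3: "r * x 3 * w $ 3 = S + (1 / \<gamma> - 1) * x 2 * w $ 2"
  proof -
    have x3: "x 3 > 0" using xpos n5 by auto
    have "r * x 3 * w $ 3 = x 3 * (r * w $ 3)" by simp
    also have "\<dots> = (\<Sum>j<n. x 3 * (A $$ (3, j) * w $ j))"
      unfolding row[OF n5(4)] sum_distrib_left ..
    also have "\<dots> = (\<Sum>j<n. x j * w $ j + (if j = 2 then (1 / \<gamma> - 1) * x 2 * w $ 2 else 0))"
      using x3 assms(4) n5
      by (intro sum.cong refl) (auto simp: A_def EM_matrix_def field_simps)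
    also have "\<dots> = S + (1 / \<gamma> - 1) * x 2 * w $ 2"
      unfolding sum.distrib S_def using n5 by simp
    finally show ?thesis .
  qed
  have r4: "r * x 4 * w $ 4 = S"
  proof -
    have x4: "x 4 > 0" using xpos n5 by auto
    have "r * x 4 * w $ 4 = x 4 * (r * w $ 4)" by simp
    also have "\<dots> = (\<Sum>j<n. x 4 * (A $$ (4, j) * w $ j))"
      unfolding row[OF n5(5)] sum_distrib_left ..
    also have "\<dots> = S" unfolding S_def
      using x4 n5 by (intro sum.cong refl) (auto simp: A_def EM_matrix_def field_simps)
    finally show ?thesis .
  qed
  have rpos: "r > 0"
  proof (rule ccontr)
    assume "\<not> r > 0"
    hence "r * (x 4 * w $ 4) \<le> 0"
      using xpos[OF n5(5)] wp[OF n5(5)] by (intro mult_nonpos_nonneg) auto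
    thus False using r4 Spos by (simp add: mult.assoc)
  qed
  have w3: "w $ 3 > 0" using wp n5 by auto
  have p12: "x 1 * w $ 1 > 0" "x 2 * w $ 2 > 0" using xpos wp n5 by auto
  have key: "(w $ 0 / w $ 3 > x 3) \<longleftrightarrow> r * w $ 0 > r * x 3 * w $ 3"
    using w3 rpos by (simp add: pos_less_divide_eq mult.assoc)
  have key2: "(w $ 0 / w $ 3 < x 3) \<longleftrightarrow> r * w $ 0 < r * x 3 * w $ 3"
    using w3 rpos by (simp add: divide_less_eq mult.assoc)
  show ?thesis
  proof (intro conjI impI)
    assume h: "1 < \<gamma> \<and> 1 < \<delta>"
    have "(\<delta> - 1) * (x 1 * w $ 1) > 0" using h p12 by simp
    moreover have "(1 / \<gamma> - 1) * (x 2 * w $ 2) < 0" using h p12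
      by (intro mult_neg_pos) auto
    ultimately show "w $ 0 / w $ 3 > x 3" using key r0 r3 by (simp add: mult.assoc)
  next
    assume h: "\<gamma> < 1 \<and> \<delta> < 1"
    have "(\<delta> - 1) * (x 1 * w $ 1) < 0" using h p12 by (intro mult_neg_pos) auto
    moreover have "(1 / \<gamma> - 1) * (x 2 * w $ 2) > 0" using h p12 assms(4)
      by (intro mult_pos_pos[of "1 / \<gamma> - 1" "x 2 * w $ 2"]) (auto simp: field_simps)
    ultimately show "w $ 0 / w $ 3 < x 3" using key2 r0 r3 by (simp add: mult.assoc)
  qed
qed

end
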